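(* Let $E$ be a directed graph and $G(E)$ its graph inverse semigroup. The following are equivalent: (1) the semigroup operation of $G(E)$ is jointly continuous with respect to the topology $\tau_c$; (2) for each non-zero $uv^{-1}\in G(E)$ the set $M_{uv^{-1}}=\{(ab^{-1},cd^{-1})\in G(E)\times G(E)\mid ab^{-1}\cdot cd^{-1}=uv^{-1}\}$ is finite; (3) for each vertex $e\in E^0$ the set $I_e=\{u\in\operatorname{Path}(E)\mid r(u)=e\}$ is finite; (4) $G(E)$ contains neither a subsemigroup isomorphic to the bicyclic monoid nor a subsemigroup isomorphic to the semigroup $\mathcal{M}_\omega$ of $\omega\times\omega$-matrix units; (5) each $\mathcal{D}$-class of $G(E)$ is finite.
   Context: A directed graph $E=(E^0,E^1,r,s)$ consists of disjoint sets $E^0$ (vertices), $E^1$ (edges) and maps $s,r:E^1\to E^0$. Paths: vertices (length zero) and finite sequences of edges $e_1\ldots e_n$ with $r(e_i)=s(e_{i+1})$; $\operatorname{Path}(E)$ is the set of all paths, with $s(e_1\ldots e_n)=s(e_1)$, $r(e_1\ldots e_n)=r(e_n)$, $s(v)=r(v)=v$ for vertices. The graph inverse semigroup $G(E)$ is the semigroup with zero $0$ generated by $E^0$, $E^1$, and $E^{-1}=\{e^{-1}\mid e\in E^1\}$ subject to: for $a,b\in E^0$, $e,f\in E^1$: $ab=a$ if $a=b$, else $0$; $s(e)e=er(e)=e$; $e^{-1}s(e)=r(e)e^{-1}=e^{-1}$; $e^{-1}f=r(e)$ if $e=f$, else $0$. Every non-zero element is uniquely $uv^{-1}$ with $u,v\in\operatorname{Path}(E)$,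 $r(u)=r(v)$, with product $u_1v_1^{-1}\cdot u_2v_2^{-1}=u_1wv_2^{-1}$ if $u_2=v_1w$, $=u_1(v_2w)^{-1}$ if $v_1=u_2w$ (for a path $w$), and $0$ otherwise. The topology $\tau_c$ on $G(E)$: every non-zero element is isolated, and the open neighborhoods of $0$ are exactly the cofinite subsets of $G(E)$ containing $0$. The bicyclic monoid is the monoid generated by $p,q$ subject to $pq=1$. For a set $X$, $\mathcal{M}_X=(X\times X)\cup\{0\}$ with $(a,b)(c,d)=(a,d)$ if $b=c$, $0$ otherwise, and $0$ a zero. $\mathcal{D}$ denotes Green's $\mathcal{D}$-relation. *)

theory Defs
  imports "HOL-Analysis.Analysis" "HOL-Library.Sublist"
begin

text \<open>A directed graph is given by a vertex set V :: 'v set, an edge set Ed :: 'e set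
  and source/range maps s r :: 'e => 'v (only relevant on Ed).  A path is represented
  as a pair (v, es): a start vertex v and a list of edges es.  The empty list
  represents the length-zero path v; a nonempty list e1...en must start at v = s e1
  and be consecutive (r ei = s e(i+1)).\<close>

type_synonym ('v,'e) gpath = "'v \<times> 'e list"

definition is_path :: "'v set \<Rightarrow> 'e set \<Rightarrow> ('e \<Rightarrow> 'v) \<Rightarrow> ('e \<Rightarrow> 'v) \<Rightarrow> ('v,'e) gpath \<Rightarrow> bool" where
  "is_path V Ed s r p \<longleftrightarrow> fst p \<in> V \<and> set (snd p) \<subseteq> Ed
     \<and> (snd p \<noteq> [] \<longrightarrow> s (hd (snd p)) = fst p)
     \<and> (\<forall>i. Suc i < length (snd p) \<longrightarrow> r (snd p ! i) = s (snd p ! Suc i))"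

definition prange :: "('e \<Rightarrow> 'v) \<Rightarrow> ('v,'e) gpath \<Rightarrow> 'v" where
  "prange r p = (if snd p = [] then fst p else r (last (snd p)))"

text \<open>Elements of the graph inverse semigroup: zero, or u v^{-1}.\<close>
datatype ('v,'e) gis = GZero | GEl "('v,'e) gpath" "('v,'e) gpath"

definition gis_carrier :: "'v set \<Rightarrow> 'e set \<Rightarrow> ('e \<Rightarrow> 'v) \<Rightarrow> ('e \<Rightarrow> 'v) \<Rightarrow> ('v,'e) gis set" where
  "gis_carrier V Ed s r = insert GZero
     {GEl u v | u v. is_path V Ed s r u \<and> is_path V Ed s r v \<and> prange r u = prange r v}"

text \<open>Product: u1 v1^{-1} . u2 v2^{-1} = u1 w v2^{-1} if u2 = v1 w,
  = u1 (v2 w)^{-1} if v1 = u2 w, and 0 otherwise.\<close>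
fun gis_mult :: "('v,'e) gis \<Rightarrow> ('v,'e) gis \<Rightarrow> ('v,'e) gis" where
  "gis_mult GZero y = GZero"
| "gis_mult (GEl u1 v1) GZero = GZero"
| "gis_mult (GEl u1 v1) (GEl u2 v2) =
     (if fst u2 = fst v1 \<and> prefix (snd v1) (snd u2)
      then GEl (fst u1, snd u1 @ drop (length (snd v1)) (snd u2)) v2
      else if fst v1 = fst u2 \<and> prefix (snd u2) (snd v1)
      then GEl u1 (fst v2, snd v2 @ drop (length (snd u2)) (snd v1))
      else GZero)"

text \<open>The topology tau_c on a carrier G with zero z: nonzero points isolated,
  neighbourhoods of z are the cofinite subsets containing z.\<close>
definition tau_c :: "'a set \<Rightarrow> 'a \<Rightarrow> 'a topology" where
  "tau_c G z = topology (\<lambda>U. U \<subseteq> G \<and> (z \<in> U \<longrightarrow> finite (G - U)))"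

text \<open>Bicyclic monoid: element (i,j) stands for q^i p^j, where pq = 1.\<close>
fun bicyclic_mult :: "nat \<times> nat \<Rightarrow> nat \<times> nat \<Rightarrow> nat \<times> nat" where
  "bicyclic_mult (i,j) (k,l) = (i + k - min j k, j + l - min j k)"

text \<open>Semigroup of omega x omega matrix units M_omega; None is the zero.\<close>
fun matunit_mult :: "(nat \<times> nat) option \<Rightarrow> (nat \<times> nat) option \<Rightarrow> (nat \<times> nat) option" where
  "matunit_mult (Some (a,b)) (Some (c,d)) = (if b = c then Some (a,d) else None)"
| "matunit_mult _ _ = None"

definition has_iso_subsemigroup ::
  "'a set \<Rightarrow> ('a \<Rightarrow> 'a \<Rightarrow> 'a) \<Rightarrow> 'b set \<Rightarrow> ('b \<Rightarrow> 'b \<Rightarrow> 'b) \<Rightarrow> bool" where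
  "has_iso_subsemigroup G m A n \<longleftrightarrow>
     (\<exists>S f. S \<subseteq> G \<and> (\<forall>x\<in>S. \<forall>y\<in>S. m x y \<in> S) \<and> bij_betw f A S
        \<and> (\<forall>x\<in>A. \<forall>y\<in>A. f (n x y) = m (f x) (f y)))"

definition greenL :: "'a set \<Rightarrow> ('a \<Rightarrow> 'a \<Rightarrow> 'a) \<Rightarrow> 'a \<Rightarrow> 'a \<Rightarrow> bool" where
  "greenL G m a b \<longleftrightarrow> (a = b \<or> (\<exists>x\<in>G. a = m x b)) \<and> (b = a \<or> (\<exists>x\<in>G. b = m x a))"

definition greenR :: "'a set \<Rightarrow> ('a \<Rightarrow> 'a \<Rightarrow> 'a) \<Rightarrow> 'a \<Rightarrow> 'a \<Rightarrow> bool" where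
  "greenR G m a b \<longleftrightarrow> (a = b \<or> (\<exists>x\<in>G. a = m b x)) \<and> (b = a \<or> (\<exists>x\<in>G. b = m a x))"

definition greenD :: "'a set \<Rightarrow> ('a \<Rightarrow> 'a \<Rightarrow> 'a) \<Rightarrow> 'a \<Rightarrow> 'a \<Rightarrow> bool" where
  "greenD G m a b \<longleftrightarrow> (\<exists>c\<in>G. greenL G m a c \<and> greenR G m c b)"

end

theory Submission
  imports Defs
begin

lemma tau_c_istop: "istopology (\<lambda>U. U \<subseteq> G \<and> (z \<in> U \<longrightarrow> finite (G - U)))"
proof -
  have A: "S \<inter> T \<subseteq> G \<and> (z \<in> S \<inter> T \<longrightarrow> finite (G - S \<inter> T))"
    if "S \<subseteq> G \<and> (z \<in> S \<longrightarrow> finite (G - S))" "T \<subseteq> G \<and> (z \<in> T \<longrightarrow> finite (G - T))" for S T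
  proof -
    have "G - S \<inter> T = (G - S) \<union> (G - T)" by blast
    then show ?thesis using that by auto
  qed
  have B: "\<Union>K \<subseteq> G \<and> (z \<in> \<Union>K \<longrightarrow> finite (G - \<Union>K))"
    if K: "\<forall>k\<in>K. k \<subseteq> G \<and> (z \<in> k \<longrightarrow> finite (G - k))" for K
  proof (intro conjI impI)
    show "\<Union>K \<subseteq> G" using K by auto
  next
    assume "z \<in> \<Union>K" then obtain k where "k \<in> K" "z \<in> k" by auto
    with K have "finite (G - k)" by auto
    moreover have "G - \<Union>K \<subseteq> G - k" using \<open>k \<in> K\<close> by auto
    ultimately show "finite (G - \<Union>K)" by (rule finite_subset[rotated])
  qed
  show ?thesis unfolding istopology_def using A B by blast
qed

lemma openin_tau_c: "openin (tau_c G z) U \<longleftrightarrow> U \<subseteq> G \<and> (z \<in> U \<longrightarrow> finite (G - U))"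
  unfolding tau_c_def topology_inverse'[OF tau_c_istop] ..

lemma topspace_tau_c: "topspace (tau_c G z) = G"
proof -
  have "openin (tau_c G z) G" by (simp add: openin_tau_c)
  then have "G \<subseteq> topspace (tau_c G z)" by (rule openin_subset)
  moreover have "topspace (tau_c G z) \<subseteq> G"
    unfolding topspace_def openin_tau_c by blast
  ultimately show ?thesis by blast
qed

fun okp :: "'v set \<Rightarrow> 'e set \<Rightarrow> ('e \<Rightarrow> 'v) \<Rightarrow> ('e \<Rightarrow> 'v) \<Rightarrow> 'v \<Rightarrow> 'e list \<Rightarrow> bool" where
  "okp V Ed s r v [] \<longleftrightarrow> v \<in> V"
| "okp V Ed s r v (e # es) \<longleftrightarrow> v \<in> V \<and> e \<in> Ed \<and> s e = v \<and> okp V Ed s r (r e) es"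

lemma all_less_Suc_split:
  "(\<forall>i. Suc i < Suc n \<longrightarrow> P i) \<longleftrightarrow> (0 < n \<longrightarrow> P 0) \<and> (\<forall>i. Suc i < n \<longrightarrow> P (Suc i))"
proof
  assume H: "\<forall>i. Suc i < Suc n \<longrightarrow> P i"
  then show "(0 < n \<longrightarrow> P 0) \<and> (\<forall>i. Suc i < n \<longrightarrow> P (Suc i))" by simp
next
  assume H: "(0 < n \<longrightarrow> P 0) \<and> (\<forall>i. Suc i < n \<longrightarrow> P (Suc i))"
  show "\<forall>i. Suc i < Suc n \<longrightarrow> P i"
  proof (intro allI impI)
    fix i assume "Suc i < Suc n" then show "P i" using H by (cases i) auto
  qed
qed

lemma is_path_okp:
  assumes rV: "r ` Ed \<subseteq> V"
  shows "is_path V Ed s r (v, es) \<longleftrightarrow> okp V Ed s r v es"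
proof (induction es arbitrary: v)
  case Nil
  then show ?case by (simp add: is_path_def)
next
  case (Cons e es)
  have "is_path V Ed s r (v, e # es) \<longleftrightarrow>
     v \<in> V \<and> e \<in> Ed \<and> set es \<subseteq> Ed \<and> s e = v \<and>
     (es \<noteq> [] \<longrightarrow> r e = s (hd es)) \<and> (\<forall>i. Suc i < length es \<longrightarrow> r (es ! i) = s (es ! Suc i))"
    unfolding is_path_def
    apply (simp only: fst_conv snd_conv length_Cons all_less_Suc_split)
    apply (cases es) apply auto done
  also have "\<dots> \<longleftrightarrow> v \<in> V \<and> e \<in> Ed \<and> s e = v \<and> is_path V Ed s r (r e, es)"
    using rV by (auto simp: is_path_def)
  finally show ?case using Cons by simp
qed

lemma prange_Cons: "prange r (v, e # es) = prange r (r e, es)"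
  by (simp add: prange_def)

lemma prange_append: "prange r (v, xs @ ys) = prange r (prange r (v, xs), ys)"
  by (simp add: prange_def)

lemma okp_append: "okp V Ed s r v (xs @ ys) \<longleftrightarrow> okp V Ed s r v xs \<and> okp V Ed s r (prange r (v, xs)) ys"
proof (induction xs arbitrary: v)
  case Nil
  then show ?case by (cases ys) (auto simp: prange_def)
next
  case (Cons a xs)
  then show ?case by (auto simp: prange_Cons)
qed

lemma okp_V: "okp V Ed s r v es \<Longrightarrow> prange r (v, es) \<in> V"
  by (induction es arbitrary: v) (auto simp: prange_def split: if_splits)

lemma prange_pair: "prange r (fst p, snd p) = prange r p" by simp

locale gisg =
  fixes V :: "'v set" and Ed :: "'e set" and s r :: "'e \<Rightarrow> 'v"
  assumes rV: "r ` Ed \<subseteq> V"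
begin

abbreviation "pth \<equiv> is_path V Ed s r"
abbreviation "GG \<equiv> gis_carrier V Ed s r"

lemma pth_iff: "pth p \<longleftrightarrow> okp V Ed s r (fst p) (snd p)"
  using is_path_okp[OF rV, where v="fst p" and es="snd p"] by simp

lemma GEl_in: "GEl u v \<in> GG \<longleftrightarrow> pth u \<and> pth v \<and> prange r u = prange r v"
  unfolding gis_carrier_def by blast

lemma GZero_in: "GZero \<in> GG" by (simp add: gis_carrier_def)

lemma pth_ext:
  assumes "pth a" "pth c" "fst c = fst b" "snd c = snd b @ w" "prange r a = prange r b"
  shows "pth (fst a, snd a @ w) \<and> prange r (fst a, snd a @ w) = prange r c"
proof -
  have "okp V Ed s r (fst b) (snd b @ w)" using assms(2,3,4) by (simp add: pth_iff)
  then have w: "okp V Ed s r (prange r b) w" using okp_append[of V Ed s r "fst b" "snd b" w] by simp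
  have "okp V Ed s r (fst a) (snd a @ w)"
    using okp_append[of V Ed s r "fst a" "snd a" w] assms(1,5) w by (simp add: pth_iff)
  moreover have "prange r (fst a, snd a @ w) = prange r c"
    using assms(3,4,5) prange_append[of r "fst a" "snd a" w] prange_append[of r "fst b" "snd b" w]
    by (metis prange_pair)
  ultimately show ?thesis by (simp add: pth_iff)
qed

lemma mult_closed:
  assumes "x \<in> GG" "y \<in> GG" shows "gis_mult x y \<in> GG"
proof (cases x)
  case GZero then show ?thesis by (simp add: GZero_in)
next
  case (GEl a b) note x = this
  show ?thesis
  proof (cases y)
    case GZero then show ?thesis using x by (simp add: GZero_in)
  next
    case (GEl c d) note y = this
    have a: "pth a" "pth b" "prange r a = prange r b" using assms(1) x by (auto simp: GEl_in)
    have c: "pth c" "pth d" "prange r c = prange r d" using assms(2) y by (auto simp: GEl_in)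
    show ?thesis
    proof (cases "fst c = fst b \<and> prefix (snd b) (snd c)")
      case True
      define w where "w = drop (length (snd b)) (snd c)"
      have sc: "snd c = snd b @ w" using True unfolding w_def by (metis prefix_def append_eq_conv_conj)
      have "pth (fst a, snd a @ w) \<and> prange r (fst a, snd a @ w) = prange r c"
        using pth_ext[OF a(1) c(1)] True sc a(3) by blast
      then show ?thesis using x y True c by (simp add: GEl_in w_def)
    next
      case False note F = this
      show ?thesis
      proof (cases "fst b = fst c \<and> prefix (snd c) (snd b)")
        case True
        define w where "w = drop (length (snd c)) (snd b)"
        have sb: "snd b = snd c @ w" using True unfolding w_def by (metis prefix_def append_eq_conv_conj)
        have "pth (fst d, snd d @ w) \<and> prange r (fst d, snd d @ w) = prange r b"
          using pth_ext[OF c(2) a(2)] True sb c(3) by metis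
        then show ?thesis using x y True F a by (simp add: GEl_in w_def)
      next
        case False
        then show ?thesis using x y F by (auto simp: GZero_in)
      qed
    qed
  qed
qed

end

lemma mult_zero_right[simp]: "gis_mult x GZero = GZero"
  by (cases x) auto

lemma mult_snd:
  assumes "gis_mult x (GEl c d) = GEl p q"
  shows "fst q = fst d \<and> prefix (snd d) (snd q)"
  using assms by (cases x) (auto split: if_splits)

lemma mult_fst:
  assumes "gis_mult (GEl a b) y = GEl p q"
  shows "fst p = fst a \<and> prefix (snd a) (snd p)"
  using assms by (cases y) (auto split: if_splits)

definition pre_set :: "('v,'e) gpath \<Rightarrow> ('v,'e) gpath set" where
  "pre_set p = (\<lambda>k. (fst p, take k (snd p))) ` {..length (snd p)}"

lemma finite_pre_set: "finite (pre_set p)"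
  unfolding pre_set_def by simp

lemma in_pre_set:
  assumes "fst q = fst p" "snd p = snd q @ w"
  shows "q \<in> pre_set p"
proof -
  have "q = (fst p, take (length (snd q)) (snd p))" using assms by (cases q) auto
  moreover have "length (snd q) \<le> length (snd p)" using assms by simp
  ultimately show ?thesis unfolding pre_set_def by blast
qed

lemma prefix_app: "prefix xs ys \<Longrightarrow> ys = xs @ drop (length xs) ys"
  by (metis append_eq_conv_conj prefix_def)

context gisg
begin

lemma pth_range_V: "pth p \<Longrightarrow> prange r p \<in> V"
  using okp_V[of V Ed s r "fst p" "snd p"] by (simp add: pth_iff)

lemma finite_T:
  assumes fin: "\<forall>e\<in>V. finite {u. pth u \<and> prange r u = e}" and R: "finite R"
  shows "finite {p. pth p \<and> prange r p \<in> R}"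
proof -
  have "{p. pth p \<and> prange r p \<in> R} \<subseteq> (\<Union>e\<in>R \<inter> V. {u. pth u \<and> prange r u = e})"
    using pth_range_V by auto
  moreover have "finite (\<Union>e\<in>R \<inter> V. {u. pth u \<and> prange r u = e})" using fin R by auto
  ultimately show ?thesis by (rule finite_subset)
qed

lemma finite_M:
  assumes fin: "\<forall>e\<in>V. finite {u. pth u \<and> prange r u = e}"
  shows "finite {(x, y). x \<in> GG \<and> y \<in> GG \<and> gis_mult x y = GEl u v}"
proof -
  define R where "R = prange r ` (pre_set u \<union> pre_set v)"
  define T where "T = {p. pth p \<and> prange r p \<in> R}"
  have fR: "finite R" unfolding R_def by (simp add: finite_pre_set)
  have fT: "finite T" unfolding T_def using finite_T[OF fin fR] .
  define H where "H = (\<lambda>(p, q). GEl p q) ` (T \<times> T)"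
  have fH: "finite H" unfolding H_def using fT by simp
  have sub: "{(x, y). x \<in> GG \<and> y \<in> GG \<and> gis_mult x y = GEl u v} \<subseteq> H \<times> H"
  proof (clarify)
    fix x y assume xG: "x \<in> GG" and yG: "y \<in> GG" and m: "gis_mult x y = GEl u v"
    obtain a b where x: "x = GEl a b" using m by (cases x) auto
    obtain c d where y: "y = GEl c d" using m by (cases y) auto
    have a: "pth a" "pth b" "prange r a = prange r b" using xG x by (auto simp: GEl_in)
    have c: "pth c" "pth d" "prange r c = prange r d" using yG y by (auto simp: GEl_in)
    have key: "prange r a \<in> R \<and> prange r d \<in> R"
    proof (cases "fst c = fst b \<and> prefix (snd b) (snd c)")
      case True
      then have "u = (fst a, snd a @ drop (length (snd b)) (snd c))" "d = v" using m x y by auto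
      then have "a \<in> pre_set u" "d \<in> pre_set v"
        using in_pre_set[of a u] in_pre_set[of v v "[]"] by auto
      then show ?thesis unfolding R_def by auto
    next
      case F: False
      show ?thesis
      proof (cases "fst b = fst c \<and> prefix (snd c) (snd b)")
        case True
        then have "a = u" "v = (fst d, snd d @ drop (length (snd c)) (snd b))" using m x y F by auto
        then have "u \<in> pre_set u" "d \<in> pre_set v"
          using in_pre_set[of u u "[]"] in_pre_set[of d v] by auto
        then show ?thesis unfolding R_def using \<open>a = u\<close> by auto
      next
        case False
        then show ?thesis using m x y F by auto
      qed
    qed
    have "a \<in> T" "b \<in> T" "c \<in> T" "d \<in> T" using key a c unfolding T_def by auto
    then show "x \<in> H \<and> y \<in> H" unfolding H_def x y by auto
  qed
  show ?thesis using finite_subset[OF sub] fH by simp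
qed

lemma vert_facts:
  assumes e: "e \<in> V" and a: "pth a" "prange r a = e"
  shows "GEl (e, []) a \<in> GG" "GEl a (e, []) \<in> GG" "GEl (e, []) (e, []) \<in> GG"
    "gis_mult (GEl (e, []) a) (GEl a (e, [])) = GEl (e, []) (e, [])"
proof -
  have p: "pth (e, [])" using e by (simp add: pth_iff)
  have pr: "prange r (e, []) = e" by (simp add: prange_def)
  show "GEl (e, []) a \<in> GG" "GEl a (e, []) \<in> GG" "GEl (e, []) (e, []) \<in> GG"
    using p pr a by (auto simp: GEl_in)
  show "gis_mult (GEl (e, []) a) (GEl a (e, [])) = GEl (e, []) (e, [])" by simp
qed

lemma L2to3:
  assumes M: "\<forall>z\<in>GG. z \<noteq> GZero \<longrightarrow> finite {(x, y). x \<in> GG \<and> y \<in> GG \<and> gis_mult x y = z}"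
  shows "\<forall>e\<in>V. finite {u. pth u \<and> prange r u = e}"
proof
  fix e assume e: "e \<in> V"
  let ?I = "{u. pth u \<and> prange r u = e}"
  let ?z = "GEl (e, []) (e, [])"
  have zG: "?z \<in> GG" using e by (simp add: GEl_in pth_iff prange_def)
  have fM: "finite {(x, y). x \<in> GG \<and> y \<in> GG \<and> gis_mult x y = ?z}" using M zG by auto
  have "(\<lambda>a. (GEl (e, []) a, GEl a (e, []))) ` ?I \<subseteq> {(x, y). x \<in> GG \<and> y \<in> GG \<and> gis_mult x y = ?z}"
    using vert_facts[OF e] by auto
  then have "finite ((\<lambda>a. (GEl (e, []) a, GEl a (e, []))) ` ?I)" using fM finite_subset by blast
  moreover have "inj_on (\<lambda>a. (GEl (e, []) a, GEl a (e, []))) ?I" by (rule inj_onI) auto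
  ultimately show "finite ?I" using finite_imageD by blast
qed

lemma L1to3:
  assumes cont: "continuous_map (prod_topology (tau_c GG GZero) (tau_c GG GZero)) (tau_c GG GZero)
            (\<lambda>(x, y). gis_mult x y)"
  shows "\<forall>e\<in>V. finite {u. pth u \<and> prange r u = e}"
proof
  fix e assume e: "e \<in> V"
  let ?I = "{u. pth u \<and> prange r u = e}"
  let ?z = "GEl (e, []) (e, [])"
  have zG: "?z \<in> GG" using e by (simp add: GEl_in pth_iff prange_def)
  let ?U = "GG - {?z}"
  have "GG - ?U \<subseteq> {?z}" by blast
  then have "finite (GG - ?U)" using finite_subset by blast
  then have Uo: "openin (tau_c GG GZero) ?U" by (simp add: openin_tau_c)
  let ?W = "{p \<in> topspace (prod_topology (tau_c GG GZero) (tau_c GG GZero)). (\<lambda>(x, y). gis_mult x y) p \<in> ?U}"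
  have Wo: "openin (prod_topology (tau_c GG GZero) (tau_c GG GZero)) ?W"
    using openin_continuous_map_preimage[OF cont Uo] .
  have mem: "(GZero, GZero) \<in> ?W"
  proof -
    have "GZero \<noteq> ?z" by simp
    then show ?thesis using GZero_in by (simp add: topspace_prod_topology topspace_tau_c)
  qed
  obtain A B where A: "openin (tau_c GG GZero) A" and B: "openin (tau_c GG GZero) B"
    and zA: "GZero \<in> A" and zB: "GZero \<in> B" and AB: "A \<times> B \<subseteq> ?W"
    using iffD1[OF openin_prod_topology_alt Wo, rule_format, OF mem] by blast
  have fA: "finite (GG - A)" using A zA by (simp add: openin_tau_c)
  have fB: "finite (GG - B)" using B zB by (simp add: openin_tau_c)
  have X1: "finite ((GEl (e, [])) -` (GG - A))"
    by (rule finite_vimageI[OF fA]) (rule injI, simp)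
  have X2: "finite ((\<lambda>a. GEl a (e, [])) -` (GG - B))"
    by (rule finite_vimageI[OF fB]) (rule injI, simp)
  have "?I \<subseteq> (GEl (e, [])) -` (GG - A) \<union> (\<lambda>a. GEl a (e, [])) -` (GG - B)"
  proof
    fix a assume aI: "a \<in> ?I"
    then have a: "pth a" "prange r a = e" by auto
    note vf = vert_facts[OF e a]
    show "a \<in> (GEl (e, [])) -` (GG - A) \<union> (\<lambda>a. GEl a (e, [])) -` (GG - B)"
    proof (rule ccontr)
      assume "\<not> ?thesis"
      then have "GEl (e, []) a \<in> A" "GEl a (e, []) \<in> B" using vf by auto
      then have "(GEl (e, []) a, GEl a (e, [])) \<in> ?W" using AB by blast
      then have "gis_mult (GEl (e, []) a) (GEl a (e, [])) \<in> ?U" by simp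
      then show False using vf(4) by simp
    qed
  qed
  then show "finite ?I" by (rule finite_subset) (rule finite_UnI[OF X1 X2])
qed

lemma L2to1:
  assumes M: "\<forall>z\<in>GG. z \<noteq> GZero \<longrightarrow> finite {(x, y). x \<in> GG \<and> y \<in> GG \<and> gis_mult x y = z}"
  shows "continuous_map (prod_topology (tau_c GG GZero) (tau_c GG GZero)) (tau_c GG GZero)
            (\<lambda>(x, y). gis_mult x y)"
  unfolding continuous_map_def topspace_prod_topology topspace_tau_c
proof (intro conjI allI impI)
  show "(\<lambda>(x, y). gis_mult x y) \<in> GG \<times> GG \<rightarrow> GG" using mult_closed by auto
next
  fix U assume Uo: "openin (tau_c GG GZero) U"
  have UG: "U \<subseteq> GG" using Uo by (simp add: openin_tau_c)
  let ?MM = "\<lambda>z. {(x, y). x \<in> GG \<and> y \<in> GG \<and> gis_mult x y = z}"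
  have sing: "openin (tau_c GG GZero) {x}" if "x \<in> GG" "x \<noteq> GZero" for x
    using that by (simp add: openin_tau_c)
  show "openin (prod_topology (tau_c GG GZero) (tau_c GG GZero)) {x \<in> GG \<times> GG. (case x of (x, y) \<Rightarrow> gis_mult x y) \<in> U}"
    (is "openin _ ?W")
    unfolding openin_prod_topology_alt
  proof (intro allI impI)
    fix x y assume xy: "(x, y) \<in> ?W"
    then have xG: "x \<in> GG" and yG: "y \<in> GG" and mU: "gis_mult x y \<in> U" by auto
    show "\<exists>A B. openin (tau_c GG GZero) A \<and> openin (tau_c GG GZero) B \<and> x \<in> A \<and> y \<in> B \<and> A \<times> B \<subseteq> ?W"
    proof (cases "x \<noteq> GZero \<and> y \<noteq> GZero")
      case True
      then show ?thesis using sing xG yG xy by (intro exI[of _ "{x}"] exI[of _ "{y}"]) auto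
    next
      case False
      then have "gis_mult x y = GZero" by auto
      then have zU: "GZero \<in> U" using mU by simp
      define F where "F = GG - U"
      have fF: "finite F" using Uo zU unfolding F_def by (simp add: openin_tau_c)
      have nzF: "GZero \<notin> F" using zU unfolding F_def by auto
      define Mall where "Mall = (\<Union>f\<in>F. ?MM f)"
      have "\<forall>f\<in>F. finite (?MM f)"
      proof
        fix f assume "f \<in> F"
        then have "f \<in> GG" "f \<noteq> GZero" using nzF unfolding F_def by auto
        then show "finite (?MM f)" using M by blast
      qed
      then have fMall: "finite Mall" unfolding Mall_def using fF by blast
      have inMall: "(x', y') \<in> Mall" if "x' \<in> GG" "y' \<in> GG" "gis_mult x' y' \<notin> U" for x' y'
      proof -
        have "gis_mult x' y' \<in> F" using that mult_closed unfolding F_def by auto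
        then show ?thesis unfolding Mall_def using that by auto
      qed
      have z1: "GZero \<notin> fst ` Mall" unfolding Mall_def using nzF by auto
      have z2: "GZero \<notin> snd ` Mall" unfolding Mall_def using nzF by auto
      show ?thesis
      proof (cases "x = GZero")
        case x0: True
        show ?thesis
        proof (cases "y = GZero")
          case True
          let ?A = "GG - fst ` Mall" and ?B = "GG - snd ` Mall"
          have "GG - ?A \<subseteq> fst ` Mall" "GG - ?B \<subseteq> snd ` Mall" by blast+
          then have fAB: "finite (GG - ?A)" "finite (GG - ?B)"
            using finite_subset[OF _ finite_imageI[OF fMall]] by blast+
          have A0: "GZero \<in> ?A" using GZero_in z1 by blast
          have B0: "GZero \<in> ?B" using GZero_in z2 by blast
          have oA: "openin (tau_c GG GZero) ?A" unfolding openin_tau_c using fAB(1) by blast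
          have oB: "openin (tau_c GG GZero) ?B" unfolding openin_tau_c using fAB(2) by blast
          have sub: "?A \<times> ?B \<subseteq> ?W"
          proof
            fix p assume "p \<in> ?A \<times> ?B"
            then obtain x' y' where p: "p = (x', y')" "x' \<in> GG" "x' \<notin> fst ` Mall" "y' \<in> GG" "y' \<notin> snd ` Mall"
              by blast
            have "gis_mult x' y' \<in> U"
            proof (rule ccontr)
              assume "gis_mult x' y' \<notin> U"
              then have "(x', y') \<in> Mall" using inMall p(2,4) by blast
              then have "x' \<in> fst ` Mall" using image_eqI[of x' fst "(x', y')"] by simp
              then show False using p(3) by blast
            qed
            then show "p \<in> ?W" using p by simp
          qed
          show ?thesis
            by (rule exI[of _ ?A], rule exI[of _ ?B], intro conjI oA oB sub) (simp_all only: x0 True A0 B0)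
        next
          case False
          let ?A = "{x' \<in> GG. gis_mult x' y \<in> U}"
          have "GG - ?A \<subseteq> fst ` Mall"
          proof
            fix x' assume "x' \<in> GG - ?A"
            then have "(x', y) \<in> Mall" using inMall yG by auto
            then show "x' \<in> fst ` Mall" using image_eqI[of x' fst "(x', y)"] by simp
          qed
          then have "finite (GG - ?A)" using finite_subset[OF _ finite_imageI[OF fMall]] by blast
          then have "openin (tau_c GG GZero) ?A" by (auto simp: openin_tau_c)
          moreover have "?A \<times> {y} \<subseteq> ?W" using yG by auto
          ultimately show ?thesis
            by (intro exI[of _ ?A] exI[of _ "{y}"]) (use sing[OF yG False] x0 zU GZero_in in auto)
        qed
      next
        case xn: False
        then have y0: "y = GZero" using False by auto
        let ?B = "{y' \<in> GG. gis_mult x y' \<in> U}"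
        have "GG - ?B \<subseteq> snd ` Mall"
        proof
          fix y' assume "y' \<in> GG - ?B"
          then have "(x, y') \<in> Mall" using inMall xG by auto
          then show "y' \<in> snd ` Mall" using image_eqI[of y' snd "(x, y')"] by simp
        qed
        then have "finite (GG - ?B)" using finite_subset[OF _ finite_imageI[OF fMall]] by blast
        then have "openin (tau_c GG GZero) ?B" by (auto simp: openin_tau_c)
        moreover have "{x} \<times> ?B \<subseteq> ?W" using xG by auto
        ultimately show ?thesis
          by (intro exI[of _ "{x}"] exI[of _ ?B]) (use sing[OF xG xn] y0 zU GZero_in in auto)
      qed
    qed
  qed
qed

lemma ext_antisym:
  assumes "fst q = fst d \<and> prefix (snd d) (snd q)" "fst d = fst q \<and> prefix (snd q) (snd d)"
  shows "q = d"
  using assms prefix_order.antisym by (metis prod.collapse)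

lemma greenL_snd:
  assumes "greenL GG gis_mult (GEl u v) c"
  shows "\<exists>c1. c = GEl c1 v"
proof -
  from assms have L1: "GEl u v = c \<or> (\<exists>x\<in>GG. GEl u v = gis_mult x c)"
    and L2: "c = GEl u v \<or> (\<exists>x\<in>GG. c = gis_mult x (GEl u v))"
    unfolding greenL_def by auto
  have cnz: "c \<noteq> GZero" using L1 by auto
  then obtain c1 c2 where c: "c = GEl c1 c2" by (cases c) auto
  have e1: "fst c2 = fst v \<and> prefix (snd v) (snd c2)"
    using L2 c mult_snd[of _ u v c1 c2] by auto
  have e2: "fst v = fst c2 \<and> prefix (snd c2) (snd v)"
    using L1 c mult_snd[of _ c1 c2 u v] by auto
  have "c2 = v" using ext_antisym[OF e1 e2] .
  then show ?thesis using c by blast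
qed

lemma greenR_fst:
  assumes "greenR GG gis_mult (GEl u v) c"
  shows "\<exists>c2. c = GEl u c2"
proof -
  from assms have L1: "GEl u v = c \<or> (\<exists>x\<in>GG. GEl u v = gis_mult c x)"
    and L2: "c = GEl u v \<or> (\<exists>x\<in>GG. c = gis_mult (GEl u v) x)"
    unfolding greenR_def by auto
  have cnz: "c \<noteq> GZero" using L1 by auto
  then obtain c1 c2 where c: "c = GEl c1 c2" by (cases c) auto
  have e1: "fst c1 = fst u \<and> prefix (snd u) (snd c1)"
    using L2 c mult_fst[of u v _ c1 c2] by auto
  have e2: "fst u = fst c1 \<and> prefix (snd c1) (snd u)"
    using L1 c mult_fst[of c1 c2 _ u v] by auto
  have "c1 = u" using ext_antisym[OF e1 e2] .
  then show ?thesis using c by blast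
qed

lemma L3to5:
  assumes fin: "\<forall>e\<in>V. finite {u. pth u \<and> prange r u = e}"
  shows "\<forall>a\<in>GG. finite {b \<in> GG. greenD GG gis_mult a b}"
proof
  fix a assume aG: "a \<in> GG"
  show "finite {b \<in> GG. greenD GG gis_mult a b}"
  proof (cases a)
    case GZero
    have "{b \<in> GG. greenD GG gis_mult a b} \<subseteq> {GZero}"
      unfolding GZero greenD_def greenL_def greenR_def by auto
    then show ?thesis using finite_subset by blast
  next
    case (GEl u v)
    have vp: "pth v" using aG GEl by (simp add: GEl_in)
    define e where "e = prange r v"
    have eV: "e \<in> V" using pth_range_V[OF vp] e_def by simp
    let ?I = "{u. pth u \<and> prange r u = e}"
    have "{b \<in> GG. greenD GG gis_mult a b} \<subseteq> (\<lambda>(p, q). GEl p q) ` (?I \<times> ?I)"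
    proof
      fix b assume "b \<in> {b \<in> GG. greenD GG gis_mult a b}"
      then have bG: "b \<in> GG" and D: "greenD GG gis_mult (GEl u v) b" using GEl by auto
      then obtain c where cG: "c \<in> GG" and L: "greenL GG gis_mult (GEl u v) c"
        and R: "greenR GG gis_mult c b" unfolding greenD_def by blast
      obtain c1 where c: "c = GEl c1 v" using greenL_snd[OF L] by blast
      obtain b2 where b: "b = GEl c1 b2" using greenR_fst[of c1 v b] R c by blast
      have "pth c1" "prange r c1 = e" using cG c e_def by (auto simp: GEl_in)
      moreover have "pth b2" "prange r b2 = prange r c1" using bG b by (auto simp: GEl_in)
      ultimately show "b \<in> (\<lambda>(p, q). GEl p q) ` (?I \<times> ?I)" using b by auto
    qed
    moreover have "finite ((\<lambda>(p, q). GEl p q) ` (?I \<times> ?I))" using fin eV by auto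
    ultimately show ?thesis using finite_subset by blast
  qed
qed

lemma L5to4:
  assumes D: "\<forall>a\<in>GG. finite {b \<in> GG. greenD GG gis_mult a b}"
  shows "\<not> has_iso_subsemigroup GG gis_mult (UNIV :: (nat \<times> nat) set) bicyclic_mult
       \<and> \<not> has_iso_subsemigroup GG gis_mult (UNIV :: (nat \<times> nat) option set) matunit_mult"
proof (intro conjI notI)
  assume "has_iso_subsemigroup GG gis_mult (UNIV :: (nat \<times> nat) set) bicyclic_mult"
  then obtain S f where SG: "S \<subseteq> GG" and bij: "bij_betw f (UNIV :: (nat \<times> nat) set) S"
    and hom: "\<And>x y. f (bicyclic_mult x y) = gis_mult (f x) (f y)"
    unfolding has_iso_subsemigroup_def by blast
  have fG: "f x \<in> GG" for x using bij SG unfolding bij_betw_def by auto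
  have inj: "inj f" using bij unfolding bij_betw_def by simp
  let ?a = "f (0, 0)"
  have "greenD GG gis_mult ?a (f (i, j))" for i j
  proof -
    have m1: "f (0, 0) = gis_mult (f (0, i)) (f (i, 0))" using hom[of "(0, i)" "(i, 0)"] by simp
    have m2: "f (i, 0) = gis_mult (f (i, 0)) (f (0, 0))" using hom[of "(i, 0)" "(0, 0)"] by simp
    have m3: "f (i, 0) = gis_mult (f (i, j)) (f (j, 0))" using hom[of "(i, j)" "(j, 0)"] by simp
    have m4: "f (i, j) = gis_mult (f (i, 0)) (f (0, j))" using hom[of "(i, 0)" "(0, j)"] by simp
    show ?thesis unfolding greenD_def greenL_def greenR_def
      using m1 m2 m3 m4 fG by blast
  qed
  then have "range f \<subseteq> {b \<in> GG. greenD GG gis_mult ?a b}" using fG by auto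
  moreover have "infinite (range f)" using inj
    by (simp add: finite_image_iff infinite_UNIV_char_0 finite_prod)
  ultimately show False using D fG finite_subset by metis
next
  assume "has_iso_subsemigroup GG gis_mult (UNIV :: (nat \<times> nat) option set) matunit_mult"
  then obtain S f where SG: "S \<subseteq> GG" and bij: "bij_betw f (UNIV :: (nat \<times> nat) option set) S"
    and hom: "\<And>x y. f (matunit_mult x y) = gis_mult (f x) (f y)"
    unfolding has_iso_subsemigroup_def by blast
  have fG: "f x \<in> GG" for x using bij SG unfolding bij_betw_def by auto
  have inj: "inj f" using bij unfolding bij_betw_def by simp
  let ?a = "f (Some (0, 0))"
  have "greenD GG gis_mult ?a (f (Some (i, j)))" for i j
  proof -
    have m1: "f (Some (0, 0)) = gis_mult (f (Some (0, i))) (f (Some (i, 0)))" using hom[of "Some (0, i)" "Some (i, 0)"] by simp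
    have m2: "f (Some (i, 0)) = gis_mult (f (Some (i, 0))) (f (Some (0, 0)))" using hom[of "Some (i, 0)" "Some (0, 0)"] by simp
    have m3: "f (Some (i, 0)) = gis_mult (f (Some (i, j))) (f (Some (j, 0)))" using hom[of "Some (i, j)" "Some (j, 0)"] by simp
    have m4: "f (Some (i, j)) = gis_mult (f (Some (i, 0))) (f (Some (0, j)))" using hom[of "Some (i, 0)" "Some (0, j)"] by simp
    show ?thesis unfolding greenD_def greenL_def greenR_def
      using m1 m2 m3 m4 fG by blast
  qed
  then have "f ` range Some \<subseteq> {b \<in> GG. greenD GG gis_mult ?a b}" using fG by auto
  moreover have "infinite (f ` range Some)"
  proof
    assume "finite (f ` range Some)"
    then have "finite (range (Some :: nat \<times> nat \<Rightarrow> _))"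
      using inj finite_image_iff[of f "range Some"] by (simp add: inj_on_subset)
    then have "finite (UNIV :: (nat \<times> nat) set)" using finite_imageD[of Some UNIV] by simp
    then show False by (simp add: finite_prod)
  qed
  ultimately show False using D fG finite_subset by metis
qed

lemma pw_facts:
  assumes cs: "pth (e, cs)" "prange r (e, cs) = e"
  shows "pth (e, concat (replicate i cs)) \<and> prange r (e, concat (replicate i cs)) = e"
proof (induction i)
  case 0
  have "e \<in> V" using cs(1) by (cases cs) (auto simp: pth_iff)
  then show ?case by (simp add: pth_iff prange_def)
next
  case (Suc i)
  have o1: "okp V Ed s r e cs" using cs(1) by (simp add: pth_iff)
  have o2: "okp V Ed s r e (concat (replicate i cs))" using Suc by (simp add: pth_iff)
  have "okp V Ed s r e (cs @ concat (replicate i cs))"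
    using okp_append[of V Ed s r e cs "concat (replicate i cs)"] o1 o2 cs(2) by simp
  moreover have "prange r (e, cs @ concat (replicate i cs)) = e"
    using prange_append[of r e cs "concat (replicate i cs)"] cs(2) Suc by simp
  ultimately show ?case by (simp add: pth_iff)
qed

lemma length_cr: "length (concat (replicate i cs)) = i * length cs"
  by (induction i) auto

lemma cr_add: "concat (replicate (a + b) cs) = concat (replicate a cs) @ concat (replicate b cs)"
  by (simp add: replicate_add)

lemma bicyc_embed:
  assumes cs: "pth (e, cs)" "prange r (e, cs) = e" "cs \<noteq> []"
  shows "has_iso_subsemigroup GG gis_mult (UNIV :: (nat \<times> nat) set) bicyclic_mult"
proof -
  define cr where "cr n = concat (replicate n cs)" for n
  define f where "f = (\<lambda>(i::nat, j::nat). GEl (e, cr i) (e, cr j))"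
  have pw: "pth (e, cr i) \<and> prange r (e, cr i) = e" for i
    unfolding cr_def using pw_facts[OF cs(1,2)] .
  have fG: "f x \<in> GG" for x using pw by (cases x) (simp add: f_def GEl_in)
  have lcr: "length (cr n) = n * length cs" for n unfolding cr_def by (rule length_cr)
  have inj_cr: "cr i = cr j \<Longrightarrow> i = j" for i j
    using lcr[of i] lcr[of j] cs(3) by (metis length_0_conv mult_cancel2)
  have hom: "f (bicyclic_mult x y) = gis_mult (f x) (f y)" for x y
  proof -
    obtain i j where x: "x = (i, j)" by (cases x)
    obtain k l where y: "y = (k, l)" by (cases y)
    show ?thesis
    proof (cases "j \<le> k")
      case True
      have ck: "cr k = cr j @ cr (k - j)" unfolding cr_def using cr_add[of j "k - j" cs] True by simp
      have "prefix (cr j) (cr k)" using ck by simp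
      moreover have "drop (length (cr j)) (cr k) = cr (k - j)" using ck by simp
      moreover have "cr i @ cr (k - j) = cr (i + k - j)" unfolding cr_def using cr_add[of i "k - j" cs] True by simp
      moreover have "bicyclic_mult x y = (i + k - j, l)" using x y True by (simp add: min_def)
      ultimately show ?thesis using x y by (simp add: f_def)
    next
      case False
      have cj: "cr j = cr k @ cr (j - k)" unfolding cr_def using cr_add[of k "j - k" cs] False by simp
      have np: "\<not> prefix (cr j) (cr k)"
      proof
        assume "prefix (cr j) (cr k)"
        then have "length (cr j) \<le> length (cr k)" by (rule prefix_length_le)
        then have "j * length cs \<le> k * length cs" using lcr by simp
        then show False using False cs(3) by simp
      qed
      have "prefix (cr k) (cr j)" using cj by simp
      moreover have "drop (length (cr k)) (cr j) = cr (j - k)" using cj by simp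
      moreover have "cr l @ cr (j - k) = cr (j + l - k)" unfolding cr_def using cr_add[of l "j - k" cs] False
        by (simp add: add.commute)
      moreover have "bicyclic_mult x y = (i, j + l - k)" using x y False by (simp add: min_def)
      ultimately show ?thesis using x y np by (simp add: f_def)
    qed
  qed
  have inj: "inj f"
  proof (rule injI)
    fix x y assume "f x = f y"
    then show "x = y" unfolding f_def using inj_cr by (cases x, cases y) auto
  qed
  show ?thesis unfolding has_iso_subsemigroup_def
  proof (intro exI conjI)
    show "range f \<subseteq> GG" using fG by auto
    show "\<forall>x\<in>range f. \<forall>y\<in>range f. gis_mult x y \<in> range f"
    proof (intro ballI)
      fix a b assume "a \<in> range f" "b \<in> range f"
      then obtain x y where "a = f x" "b = f y" by blast
      then show "gis_mult a b \<in> range f" by (simp add: hom[symmetric])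
    qed
    show "bij_betw f UNIV (range f)" using inj by (simp add: bij_betw_def)
    show "\<forall>x\<in>UNIV. \<forall>y\<in>UNIV. f (bicyclic_mult x y) = gis_mult (f x) (f y)" using hom by simp
  qed
qed

lemma noncyc_prefix:
  assumes nc: "\<not> (\<exists>cs. cs \<noteq> [] \<and> pth (e, cs) \<and> prange r (e, cs) = e)"
    and p: "pth p" "prange r p = e" and q: "pth q" "prange r q = e"
    and pre: "fst q = fst p" "prefix (snd p) (snd q)"
  shows "p = q"
proof -
  define w where "w = drop (length (snd p)) (snd q)"
  have sq: "snd q = snd p @ w" unfolding w_def using pre(2) by (rule prefix_app)
  have "okp V Ed s r (fst p) (snd p @ w)" using q(1) sq pre(1) by (simp add: pth_iff)
  then have "okp V Ed s r (prange r p) w" using okp_append[of V Ed s r "fst p" "snd p" w] by simp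
  then have pw: "pth (e, w)" using p(2) by (simp add: pth_iff)
  have "prange r (e, w) = prange r (fst q, snd q)"
    using prange_append[of r "fst p" "snd p" w] sq pre(1) p(2) by simp
  then have "prange r (e, w) = e" using q(2) by simp
  then have "w = []" using nc pw by blast
  then show "p = q" using sq pre(1) by (simp add: prod_eq_iff)
qed

lemma matunit_embed:
  assumes nc: "\<not> (\<exists>cs. cs \<noteq> [] \<and> pth (e, cs) \<and> prange r (e, cs) = e)"
    and inf: "infinite {u. pth u \<and> prange r u = e}"
  shows "has_iso_subsemigroup GG gis_mult (UNIV :: (nat \<times> nat) option set) matunit_mult"
proof -
  obtain g :: "nat \<Rightarrow> _" where ginj: "inj g" and gI: "range g \<subseteq> {u. pth u \<and> prange r u = e}"
    using infinite_countable_subset[OF inf] by blast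
  have gp: "pth (g i)" "prange r (g i) = e" for i using gI by auto
  have np: "\<not> (fst (g k) = fst (g j) \<and> prefix (snd (g j)) (snd (g k)))" if "j \<noteq> k" for j k
  proof
    assume "fst (g k) = fst (g j) \<and> prefix (snd (g j)) (snd (g k))"
    then have "g j = g k" using noncyc_prefix[OF nc gp(1,2) gp(1,2)] by blast
    then show False using ginj that by (simp add: inj_eq)
  qed
  define f where "f x = (case x of None \<Rightarrow> GZero | Some (i, j) \<Rightarrow> GEl (g i) (g j))" for x
  have fG: "f x \<in> GG" for x
    using gp by (cases x) (auto simp: f_def GZero_in GEl_in)
  have hom: "f (matunit_mult x y) = gis_mult (f x) (f y)" for x y
  proof (cases x)
    case None then show ?thesis by (simp add: f_def)
  next
    case (Some a)
    obtain i j where x: "x = Some (i, j)" using Some by (cases a) auto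
    show ?thesis
    proof (cases y)
      case None then show ?thesis using x by (simp add: f_def)
    next
      case (Some b)
      obtain k l where y: "y = Some (k, l)" using Some by (cases b) auto
      show ?thesis
      proof (cases "j = k")
        case True
        then show ?thesis using x y by (simp add: f_def)
      next
        case False
        then show ?thesis using x y np[OF False] np[of k j] by (auto simp: f_def)
      qed
    qed
  qed
  have inj: "inj f"
  proof (rule injI)
    fix x y assume fxy: "f x = f y"
    show "x = y"
    proof (cases x)
      case None then show ?thesis using fxy by (cases y) (auto simp: f_def)
    next
      case (Some a)
      obtain i j where x: "x = Some (i, j)" using Some by (cases a) auto
      show ?thesis
      proof (cases y)
        case None then show ?thesis using fxy x by (simp add: f_def)
      next
        case (Some b)
        obtain k l where y: "y = Some (k, l)" using Some by (cases b) auto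
        then show ?thesis using fxy x ginj by (simp add: f_def inj_eq)
      qed
    qed
  qed
  show ?thesis unfolding has_iso_subsemigroup_def
  proof (intro exI conjI)
    show "range f \<subseteq> GG" using fG by auto
    show "\<forall>x\<in>range f. \<forall>y\<in>range f. gis_mult x y \<in> range f"
    proof (intro ballI)
      fix a b assume "a \<in> range f" "b \<in> range f"
      then obtain x y where "a = f x" "b = f y" by blast
      then show "gis_mult a b \<in> range f" by (simp add: hom[symmetric])
    qed
    show "bij_betw f UNIV (range f)" using inj by (simp add: bij_betw_def)
    show "\<forall>x\<in>UNIV. \<forall>y\<in>UNIV. f (matunit_mult x y) = gis_mult (f x) (f y)" using hom by simp
  qed
qed

lemma L4to3:
  assumes "\<not> has_iso_subsemigroup GG gis_mult (UNIV :: (nat \<times> nat) set) bicyclic_mult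
       \<and> \<not> has_iso_subsemigroup GG gis_mult (UNIV :: (nat \<times> nat) option set) matunit_mult"
  shows "\<forall>e\<in>V. finite {u. pth u \<and> prange r u = e}"
proof (rule ballI, rule ccontr)
  fix e assume "e \<in> V" and inf: "infinite {u. pth u \<and> prange r u = e}"
  show False
  proof (cases "\<exists>cs. cs \<noteq> [] \<and> pth (e, cs) \<and> prange r (e, cs) = e")
    case True
    then obtain cs where "cs \<noteq> []" "pth (e, cs)" "prange r (e, cs) = e" by blast
    then show False using bicyc_embed assms by blast
  next
    case False
    then show False using matunit_embed[OF False inf] assms by blast
  qed
qed

end

theorem theorem2p4:
  fixes V :: "'v set" and Ed :: "'e set" and s r :: "'e \<Rightarrow> 'v"
  assumes "s ` Ed \<subseteq> V" and "r ` Ed \<subseteq> V"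
  defines "G \<equiv> gis_carrier V Ed s r"
  shows "(continuous_map (prod_topology (tau_c G GZero) (tau_c G GZero)) (tau_c G GZero)
            (\<lambda>(x, y). gis_mult x y)
          \<longleftrightarrow> (\<forall>z\<in>G. z \<noteq> GZero \<longrightarrow> finite {(x, y). x \<in> G \<and> y \<in> G \<and> gis_mult x y = z}))
       \<and> ((\<forall>z\<in>G. z \<noteq> GZero \<longrightarrow> finite {(x, y). x \<in> G \<and> y \<in> G \<and> gis_mult x y = z})
          \<longleftrightarrow> (\<forall>e\<in>V. finite {u. is_path V Ed s r u \<and> prange r u = e}))
       \<and> ((\<forall>e\<in>V. finite {u. is_path V Ed s r u \<and> prange r u = e})
          \<longleftrightarrow> \<not> has_iso_subsemigroup G gis_mult (UNIV :: (nat \<times> nat) set) bicyclic_mult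
              \<and> \<not> has_iso_subsemigroup G gis_mult (UNIV :: (nat \<times> nat) option set) matunit_mult)
       \<and> ((\<not> has_iso_subsemigroup G gis_mult (UNIV :: (nat \<times> nat) set) bicyclic_mult
              \<and> \<not> has_iso_subsemigroup G gis_mult (UNIV :: (nat \<times> nat) option set) matunit_mult)
          \<longleftrightarrow> (\<forall>a\<in>G. finite {b \<in> G. greenD G gis_mult a b}))"
proof -
  interpret gisg V Ed s r using assms(2) by unfold_locales
  let ?C1 = "continuous_map (prod_topology (tau_c G GZero) (tau_c G GZero)) (tau_c G GZero)
            (\<lambda>(x, y). gis_mult x y)"
  let ?C2 = "\<forall>z\<in>G. z \<noteq> GZero \<longrightarrow> finite {(x, y). x \<in> G \<and> y \<in> G \<and> gis_mult x y = z}"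
  let ?C3 = "\<forall>e\<in>V. finite {u. is_path V Ed s r u \<and> prange r u = e}"
  let ?C4 = "\<not> has_iso_subsemigroup G gis_mult (UNIV :: (nat \<times> nat) set) bicyclic_mult
              \<and> \<not> has_iso_subsemigroup G gis_mult (UNIV :: (nat \<times> nat) option set) matunit_mult"
  let ?C5 = "\<forall>a\<in>G. finite {b \<in> G. greenD G gis_mult a b}"
  have 13: "?C1 \<Longrightarrow> ?C3" unfolding G_def by (rule L1to3)
  have 32: "?C3 \<Longrightarrow> ?C2"
  proof -
    assume c3: ?C3
    show ?C2
    proof (intro ballI impI)
      fix z assume "z \<in> G" "z \<noteq> GZero"
      then obtain u v where "z = GEl u v" by (cases z) auto
      then show "finite {(x, y). x \<in> G \<and> y \<in> G \<and> gis_mult x y = z}"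
        unfolding G_def using finite_M[OF c3] by simp
    qed
  qed
  have 21: "?C2 \<Longrightarrow> ?C1" unfolding G_def by (rule L2to1)
  have 23: "?C2 \<Longrightarrow> ?C3" unfolding G_def by (rule L2to3)
  have 35: "?C3 \<Longrightarrow> ?C5" unfolding G_def by (rule L3to5)
  have 54: "?C5 \<Longrightarrow> ?C4" unfolding G_def by (rule L5to4)
  have 43: "?C4 \<Longrightarrow> ?C3" unfolding G_def by (rule L4to3)
  show ?thesis using 13 32 21 23 35 54 43 by blast
qed

end
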